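(* For all integers $n\ge1$ and real numbers $a\ge1$, $x,y\in(0,\pi)$: if $n$ is odd then $\Theta^*_{n,a}(x,y)\ge\sin(x)\sin(y)$, with equality if and only if $n=1$; if $n$ is even then $\Theta^*_{n,a}(x,y)\ge 2\sin(x)\sin(y)$, with equality if and only if $n=2$, $a=1$.
   Context: For a real number $a$ and integers $0\le m$, $\binom{m+a}{m}=\frac{(a+1)(a+2)\cdots(a+m)}{m!}$ (equal to $1$ when $m=0$). For an integer $n\ge1$, $\Theta^*_{n,a}(x,y)=\sum_{1\le j\le n,\ j\text{ odd}}\binom{n+a-j}{n-j}\frac{\sin(jx)\sin(jy)}{j}$. *)

theory Defs
  imports Complex_Main
begin

text \<open>binom m a = binom(m+a, m) = (a+1)(a+2)...(a+m)/m!  (equal to 1 when m = 0)\<close>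
definition binom_shift :: "nat \<Rightarrow> real \<Rightarrow> real" where
  "binom_shift m a = (\<Prod>i=1..m. a + real i) / fact m"

definition ThetaStar :: "nat \<Rightarrow> real \<Rightarrow> real \<Rightarrow> real \<Rightarrow> real" where
  "ThetaStar n a x y =
     (\<Sum>j\<in>{j\<in>{1..n}. odd j}. binom_shift (n - j) a * sin (real j * x) * sin (real j * y) / real j)"

end

theory Submission
  imports Defs
begin

definition Cf :: "nat \<Rightarrow> real \<Rightarrow> real" where
  "Cf m t = (\<Sum>j\<in>{1..m}. (if odd j then 1 / real j else 0) * cos (real j * t))"

definition Df :: "nat \<Rightarrow> real \<Rightarrow> real" where
  "Df m t = (\<Sum>j\<in>{1..m}. if odd j then sin (real j * t) else 0)"

lemma Df_identity: "2 * sin t * Df m t = 1 - cos (2 * real ((m+1) div 2) * t)"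
proof (induction m)
  case 0 then show ?case by (simp add: Df_def)
next
  case (Suc m)
  show ?case
  proof (cases "odd (Suc m)")
    case True
    then have e: "even m" by simp
    then have k: "real ((Suc m + 1) div 2) * 2 = real m + 2" "real ((m+1) div 2) * 2 = real m"
      by (auto elim!: evenE)
    have "2 * sin t * Df (Suc m) t = 2 * sin t * Df m t + 2 * sin t * sin (real (Suc m) * t)"
      using True by (simp add: Df_def algebra_simps)
    also have "2 * sin t * sin (real (Suc m) * t) = cos (real m * t) - cos ((real m + 2) * t)"
    proof -
      have a: "t - real (Suc m) * t = -(real m * t)" "t + real (Suc m) * t = (real m + 2) * t"
        by (simp_all add: algebra_simps)
      show ?thesis unfolding mult.assoc sin_times_sin a by simp
    qed
    finally show ?thesis using Suc.IH k
      by (simp add: mult.commute mult.left_commute add.commute)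
  next
    case False
    then have "odd m" by simp
    then have k: "(Suc m + 1) div 2 = (m+1) div 2" by (auto elim!: oddE)
    have "Df (Suc m) t = Df m t" using False by (simp add: Df_def)
    then show ?thesis using Suc.IH k by simp
  qed
qed

lemma Df_nonneg:
  assumes "0 \<le> t" "t \<le> pi"
  shows "Df m t \<ge> 0"
proof (cases "t = 0 \<or> t = pi")
  case True
  then have z: "\<And>j::nat. sin (real j * t) = 0"
    by (auto simp: sin_npi)
  show ?thesis unfolding Df_def by (rule sum_nonneg) (simp add: z)
next
  case False
  then have "sin t > 0" using assms by (intro sin_gt_zero) auto
  moreover have "2 * sin t * Df m t \<ge> 0" unfolding Df_identity by simp
  ultimately show ?thesis by (simp add: zero_le_mult_iff)
qed

lemma Cf_deriv: "((Cf m) has_real_derivative (- Df m t)) (at t)"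
proof -
  have "((\<lambda>t. \<Sum>j\<in>{1..m}. (if odd j then 1 / real j else 0) * cos (real j * t)) has_real_derivative
     (\<Sum>j\<in>{1..m}. (if odd j then 1 / real j else 0) * (- sin (real j * t) * real j))) (at t)"
    by (intro DERIV_sum DERIV_cmult) (auto intro!: derivative_eq_intros)
  moreover have "(\<Sum>j\<in>{1..m}. (if odd j then 1 / real j else 0) * (- sin (real j * t) * real j)) = - Df m t"
    unfolding Df_def sum_negf[symmetric] by (rule sum.cong) auto
  ultimately show ?thesis unfolding Cf_def by simp
qed

lemma Cf_antimono:
  assumes "0 \<le> s" "s \<le> t" "t \<le> pi"
  shows "Cf m t \<le> Cf m s"
  using assms by (intro DERIV_nonpos_imp_nonincreasing[of s t]) (auto intro!: exI[of _ "- Df m _"] Cf_deriv Df_nonneg)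

lemma Cf_even: "Cf m (- t) = Cf m t"
  unfolding Cf_def by simp

lemma Cf_refl: "Cf m (2 * pi - t) = Cf m t"
proof -
  have "\<And>j::nat. cos (real j * (2 * pi - t)) = cos (real j * t)"
  proof -
    fix j :: nat
    have "real j * (2 * pi - t) = (2 * pi) * real_of_int (int j) - (real j * t)" by (simp add: algebra_simps)
    then show "cos (real j * (2 * pi - t)) = cos (real j * t)"
      by (simp only: cos_diff cos_int_2pin sin_int_2pin)
  qed
  then show ?thesis unfolding Cf_def by simp
qed

definition gf :: "real \<Rightarrow> real \<Rightarrow> nat \<Rightarrow> real" where
  "gf x y j = (if odd j then sin (real j * x) * sin (real j * y) / real j else 0)"

definition Gf :: "real \<Rightarrow> real \<Rightarrow> nat \<Rightarrow> real" where
  "Gf x y m = (\<Sum>j\<in>{1..m}. gf x y j)"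

lemma Gf_eq: "Gf x y m = (Cf m (x - y) - Cf m (x + y)) / 2"
proof -
  have "Gf x y m = (\<Sum>j\<in>{1..m}. ((if odd j then 1 / real j else 0) * cos (real j * (x - y))
      - (if odd j then 1 / real j else 0) * cos (real j * (x + y))) / 2)"
    unfolding Gf_def gf_def
  proof (rule sum.cong)
    fix j assume "j \<in> {1..m}"
    have a: "real j * (x - y) = real j * x - real j * y" "real j * (x + y) = real j * x + real j * y"
      by (simp_all add: algebra_simps)
    show "(if odd j then sin (real j * x) * sin (real j * y) / real j else 0) =
       ((if odd j then 1 / real j else 0) * cos (real j * (x - y)) -
        (if odd j then 1 / real j else 0) * cos (real j * (x + y))) / 2"
      using \<open>j \<in> {1..m}\<close> unfolding a sin_times_sin by (auto simp: field_simps)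
  qed simp
  also have "\<dots> = (Cf m (x - y) - Cf m (x + y)) / 2"
    unfolding Cf_def sum_divide_distrib[symmetric] sum_subtractf by simp
  finally show ?thesis .
qed

lemma Gf_nonneg:
  assumes "0 < x" "x < pi" "0 < y" "y < pi"
  shows "Gf x y m \<ge> 0"
proof -
  define u where "u = \<bar>x - y\<bar>"
  have cu: "Cf m (x - y) = Cf m u"
    unfolding u_def by (cases "x \<ge> y") (auto simp: Cf_even[of m "y - x", simplified])
  have u: "0 \<le> u" "u \<le> x + y" "u \<le> 2 * pi - (x + y)" using assms unfolding u_def by auto
  have "Cf m (x + y) \<le> Cf m u"
  proof (cases "x + y \<le> pi")
    case True then show ?thesis using u by (intro Cf_antimono) auto
  next
    case False
    have "Cf m (x + y) = Cf m (2 * pi - (x + y))" using Cf_refl[of m "x + y"] by simp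
    also have "\<dots> \<le> Cf m u" using u False by (intro Cf_antimono) auto
    finally show ?thesis .
  qed
  then show ?thesis unfolding Gf_eq cu by simp
qed

lemma abel:
  fixes c g :: "nat \<Rightarrow> real"
  shows "(\<Sum>j\<in>{1..n}. c j * g j) = c n * (\<Sum>j\<in>{1..n}. g j)
     + (\<Sum>j\<in>{1..<n}. (c j - c (Suc j)) * (\<Sum>i\<in>{1..j}. g i))"
proof (induction n)
  case 0 then show ?case by simp
next
  case (Suc n)
  show ?case
  proof (cases "n = 0")
    case True then show ?thesis by simp
  next
    case False
    have "(\<Sum>j\<in>{1..<Suc n}. (c j - c (Suc j)) * (\<Sum>i\<in>{1..j}. g i)) =
       (\<Sum>j\<in>{1..<n}. (c j - c (Suc j)) * (\<Sum>i\<in>{1..j}. g i)) + (c n - c (Suc n)) * (\<Sum>i\<in>{1..n}. g i)"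
      using False by (simp add: sum.atLeastLessThan_Suc)
    then show ?thesis using Suc.IH by (simp add: algebra_simps)
  qed
qed

lemma binom_rec: "binom_shift (Suc k) a = binom_shift k a * (a + real (Suc k)) / real (Suc k)"
  unfolding binom_shift_def by (simp add: prod.cl_ivl_Suc field_simps)

lemma binom_ge:
  assumes "a \<ge> 1"
  shows "binom_shift k a \<ge> real k + 1"
proof (induction k)
  case 0 then show ?case by (simp add: binom_shift_def)
next
  case (Suc k)
  have "(real k + 1) * (a + real (Suc k)) \<le> binom_shift k a * (a + real (Suc k))"
    using Suc.IH assms by (intro mult_right_mono) auto
  moreover have "(real k + 2) * real (Suc k) \<le> (real k + 1) * (a + real (Suc k))"
    using assms mult_left_mono[OF assms, of "real k"] by (simp add: algebra_simps)
  ultimately have "(real k + 2) * real (Suc k) \<le> binom_shift k a * (a + real (Suc k))" by linarith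
  then show ?case unfolding binom_rec by (simp add: field_simps)
qed

lemma binom_diff:
  assumes "a \<ge> 1"
  shows "binom_shift (Suc k) a - binom_shift k a \<ge> 1"
proof -
  have "binom_shift (Suc k) a - binom_shift k a = binom_shift k a * a / real (Suc k)"
    unfolding binom_rec by (simp add: field_simps)
  moreover have "binom_shift k a * a \<ge> (real k + 1) * 1"
    using binom_ge[OF assms, of k] assms by (intro mult_mono) auto
  moreover have "binom_shift k a * a / real (Suc k) \<ge> 1"
    using calculation(2) by (simp add: le_divide_eq)
  ultimately show ?thesis by linarith
qed

lemma sin3: "sin (3 * x :: real) = 3 * sin x - 4 * sin x ^ 3"
proof -
  have "sin (3 * x) = sin (2 * x + x)" by simp
  also have "\<dots> = 2 * sin x * cos x * cos x + (cos x ^ 2 - sin x ^ 2) * sin x"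
    by (simp only: sin_add sin_double cos_double)
  also have "\<dots> = 2 * sin x * (cos x)^2 + ((cos x)^2 - (sin x)^2) * sin x"
    by (simp add: power2_eq_square)
  also have "\<dots> = 2 * sin x * (1 - (sin x)^2) + ((1 - (sin x)^2) - (sin x)^2) * sin x"
    by (simp only: cos_squared_eq)
  also have "\<dots> = 3 * sin x - 4 * sin x ^ 3"
    by (simp add: power2_eq_square power3_eq_cube algebra_simps)
  finally show ?thesis .
qed

lemma AB_bound:
  fixes A B :: real
  assumes "-1 \<le> A" "A < 3" "-1 \<le> B" "B < 3"
  shows "3 + A * B > 0"
proof (cases "A * B \<ge> 0")
  case True then show ?thesis by simp
next
  case False
  then have "(A < 0 \<and> B > 0) \<or> (A > 0 \<and> B < 0)" by (auto simp: zero_le_mult_iff not_le)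
  then show ?thesis
  proof
    assume h: "A < 0 \<and> B > 0"
    have "(A + 1) * B \<ge> 0" using h assms by simp
    then show ?thesis using assms by (simp add: algebra_simps)
  next
    assume h: "A > 0 \<and> B < 0"
    have "(B + 1) * A \<ge> 0" using h assms by simp
    then show ?thesis using assms by (simp add: algebra_simps)
  qed
qed

lemma G3_pos:
  assumes "0 < x" "x < pi" "0 < y" "y < pi"
  shows "Gf x y 3 > 0"
proof -
  have G3: "Gf x y 3 = sin x * sin y + sin (3 * x) * sin (3 * y) / 3"
    unfolding Gf_def gf_def by (simp add: numeral_3_eq_3 sum.cl_ivl_Suc)
  define p where "p = sin x"
  define q where "q = sin y"
  have p: "0 < p" "p \<le> 1" unfolding p_def using assms by (auto intro: sin_gt_zero)
  have q: "0 < q" "q \<le> 1" unfolding q_def using assms by (auto intro: sin_gt_zero)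
  have "p^2 \<le> 1" "q^2 \<le> 1" using p q by (auto simp: power_le_one)
  then have "3 + (3 - 4 * p^2) * (3 - 4 * q^2) > 0" using p q by (intro AB_bound) auto
  then have "p * q * (3 + (3 - 4 * p^2) * (3 - 4 * q^2)) > 0" using p q by simp
  moreover have "Gf x y 3 = p * q * (3 + (3 - 4 * p^2) * (3 - 4 * q^2)) / 3"
    unfolding G3 sin3 p_def q_def by (simp add: power2_eq_square power3_eq_cube field_simps)
  ultimately show ?thesis by simp
qed

lemma Theta_sum: "ThetaStar n a x y = (\<Sum>j\<in>{1..n}. binom_shift (n - j) a * gf x y j)"
proof -
  have "ThetaStar n a x y = (\<Sum>j\<in>{1..n}. if odd j then binom_shift (n - j) a * sin (real j * x) * sin (real j * y) / real j else 0)"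
    unfolding ThetaStar_def by (rule sum.inter_filter) simp
  also have "\<dots> = (\<Sum>j\<in>{1..n}. binom_shift (n - j) a * gf x y j)"
    unfolding gf_def by (rule sum.cong) auto
  finally show ?thesis .
qed

lemma Theta_ge:
  assumes "a \<ge> 1" "0 < x" "x < pi" "0 < y" "y < pi"
  shows "ThetaStar n a x y \<ge> (\<Sum>m\<in>{1..n}. Gf x y m)"
proof -
  have "ThetaStar n a x y = binom_shift (n - n) a * Gf x y n +
     (\<Sum>j\<in>{1..<n}. (binom_shift (n - j) a - binom_shift (n - Suc j) a) * Gf x y j)"
    unfolding Theta_sum Gf_def by (rule abel)
  also have "\<dots> \<ge> Gf x y n + (\<Sum>j\<in>{1..<n}. Gf x y j)"
  proof -
    have "(\<Sum>j\<in>{1..<n}. Gf x y j) \<le> (\<Sum>j\<in>{1..<n}. (binom_shift (n - j) a - binom_shift (n - Suc j) a) * Gf x y j)"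
    proof (rule sum_mono)
      fix j assume "j \<in> {1..<n}"
      then have e: "n - j = Suc (n - Suc j)" by auto
      have "1 * Gf x y j \<le> (binom_shift (n - j) a - binom_shift (n - Suc j) a) * Gf x y j"
        using binom_diff[OF assms(1), of "n - Suc j"] Gf_nonneg[OF assms(2-5), of j] unfolding e
        by (intro mult_right_mono) auto
      then show "Gf x y j \<le> (binom_shift (n - j) a - binom_shift (n - Suc j) a) * Gf x y j" by simp
    qed
    then show ?thesis by (simp add: binom_shift_def)
  qed
  also have "Gf x y n + (\<Sum>j\<in>{1..<n}. Gf x y j) = (\<Sum>m\<in>{1..n}. Gf x y m)"
  proof (cases n)
    case 0 then show ?thesis by (simp add: Gf_def)
  next
    case (Suc k) then show ?thesis by (simp add: sum.atLeastLessThan_Suc atLeastLessThanSuc_atLeastAtMost[symmetric])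
  qed
  finally show ?thesis .
qed

theorem theorem3p9:
  fixes n :: nat and a x y :: real
  assumes "n \<ge> 1" and "a \<ge> 1"
    and "0 < x" and "x < pi" and "0 < y" and "y < pi"
  shows "(odd n \<longrightarrow> ThetaStar n a x y \<ge> sin x * sin y \<and>
            (ThetaStar n a x y = sin x * sin y \<longleftrightarrow> n = 1)) \<and>
         (even n \<longrightarrow> ThetaStar n a x y \<ge> 2 * sin x * sin y \<and>
            (ThetaStar n a x y = 2 * sin x * sin y \<longleftrightarrow> n = 2 \<and> a = 1))"
proof -
  have sp: "sin x * sin y > 0" using assms by (simp add: sin_gt_zero)
  have G1: "Gf x y 1 = sin x * sin y" by (simp add: Gf_def gf_def)
  have G2: "Gf x y 2 = sin x * sin y" by (simp add: Gf_def gf_def numeral_2_eq_2 sum.cl_ivl_Suc)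
  consider "n = 1" | "n = 2" | "n \<ge> 3" using assms(1) by linarith
  then show ?thesis
  proof cases
    case 1
    have "ThetaStar n a x y = sin x * sin y"
      unfolding Theta_sum 1 by (simp add: gf_def binom_shift_def)
    then show ?thesis using 1 by simp
  next
    case 2
    have "ThetaStar n a x y = (a + 1) * (sin x * sin y)"
      unfolding Theta_sum 2 by (simp add: gf_def binom_shift_def numeral_2_eq_2 sum.cl_ivl_Suc algebra_simps)
    moreover have "(a + 1) * (sin x * sin y) \<ge> 2 * (sin x * sin y)"
      using sp assms(2) by (intro mult_right_mono) auto
    moreover have "(a + 1) * (sin x * sin y) = 2 * (sin x * sin y) \<longleftrightarrow> a = 1"
      using sp by auto
    ultimately show ?thesis using 2 by (simp add: mult.assoc)
  next
    case 3
    have "(\<Sum>m\<in>{1,2,3}. Gf x y m) \<le> (\<Sum>m\<in>{1..n}. Gf x y m)"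
      using 3 Gf_nonneg[OF assms(3-6)] by (intro sum_mono2) auto
    moreover have "(\<Sum>m\<in>{1,2,3}. Gf x y m) = 2 * (sin x * sin y) + Gf x y 3"
      using G1 G2 by simp
    ultimately have "ThetaStar n a x y > 2 * (sin x * sin y)"
      using Theta_ge[OF assms(2-6), of n] G3_pos[OF assms(3-6)] by linarith
    then show ?thesis using 3 sp by (auto simp: mult.assoc)
  qed
qed

end
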